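(* Let $\mathcal E=\{\lambda_x,\rho_x\}_{x=1}^n$ be an ensemble of states on a finite-dimensional system $A$, let $M=(M_1,\dots,M_{d_S})$ be a measurement on $A$, and let $R$ be a system with $d_R=n$. Then $$P^Q_{\rm succ}(\mathcal E,M)=\|(\Phi_M\otimes\mathrm{id}_R)(\rho_{\mathcal E})\|^\diamond_{R|S}=P_{\rm succ}(\Phi_M(\mathcal E)).$$
   Context: $S$ is a system of dimension $d_S$ with basis $\{|j\rangle\}$; $\Phi_M\in\mathcal C(A,S)$ is the quantum-to-classical channel $\Phi_M(\sigma)=\sum_j{\rm Tr}[\sigma M_j]|j\rangle\langle j|$. $\rho_{\mathcal E}=\sum_x\lambda_x\rho_x\otimes|x\rangle\langle x|\in\mathfrak S(AR)$. $\Phi_M(\mathcal E)=\{\lambda_x,\Phi_M(\rho_x)\}$. $P^Q_{\rm succ}(\mathcal E,M)=\sup\sum_{x,j}\lambda_xp(x|j){\rm Tr}[\rho_xM_j]$ over conditional probabilities $p(x|j)$; $P_{\rm succ}(\mathcal E')=\max_N\sum_x\lambda_x{\rm Tr}[\rho'_xN_x]$ over $n$-outcome measurements $N$. For $X\in\mathcal B_h(SR)$ and $\phi\in\mathcal L(S,R)$, $\langle X,\phi\rangle={\rm Tr}[XC_{\phi^*}]$ where $C_\psi=(\psi\otimes\mathrm{id})(|I\rangle\rangle\langle\langle I|)$ is the Choi matrix and $\phi^*$ the adjoint; $\|X\|^\diamond_{R|S}=\max_{\alpha\in\mathcal C(S,R)}\langle X,\alpha\rangle$ for $X\ge0$. 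*)

theory Defs
  imports "Jordan_Normal_Form.Matrix"
begin

(* Finite-dimensional quantum systems are modelled by their dimension d;
   operators are complex d x d matrices (Jordan_Normal_Form "mat").
   Composite systems X Y use the Kronecker ordering: basis index (x,y) ~ x * dY + y. *)

definition msum :: "nat \<Rightarrow> (nat \<Rightarrow> complex mat) \<Rightarrow> nat set \<Rightarrow> complex mat" where
  "msum d f I = mat d d (\<lambda>(i,j). \<Sum>x\<in>I. f x $$ (i,j))"

definition mtrace :: "complex mat \<Rightarrow> complex" where
  "mtrace A = (\<Sum>i<dim_row A. A $$ (i,i))"

definition cadj :: "complex mat \<Rightarrow> complex mat" where
  "cadj A = mat (dim_col A) (dim_row A) (\<lambda>(i,j). cnj (A $$ (j,i)))"

definition psd :: "nat \<Rightarrow> complex mat \<Rightarrow> bool" where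
  "psd d A \<longleftrightarrow> A \<in> carrier_mat d d \<and>
     (\<forall>v \<in> carrier_vec d. let q = (\<Sum>i<d. cnj (vec_index v i) * vec_index (A *\<^sub>v v) i) in Im q = 0 \<and> Re q \<ge> 0)"

definition state :: "nat \<Rightarrow> complex mat \<Rightarrow> bool" where
  "state d \<rho> \<longleftrightarrow> psd d \<rho> \<and> mtrace \<rho> = 1"

definition povm :: "nat \<Rightarrow> nat \<Rightarrow> (nat \<Rightarrow> complex mat) \<Rightarrow> bool" where
  "povm d m M \<longleftrightarrow> (\<forall>j<m. psd d (M j)) \<and> msum d (\<lambda>j. M j) {..<m} = 1\<^sub>m d"

definition munit :: "nat \<Rightarrow> nat \<Rightarrow> nat \<Rightarrow> complex mat" where
  "munit d i j = mat d d (\<lambda>(a,b). if a = i \<and> b = j then 1 else 0)"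

definition kron :: "complex mat \<Rightarrow> complex mat \<Rightarrow> complex mat" where
  "kron A B = mat (dim_row A * dim_row B) (dim_col A * dim_col B)
     (\<lambda>(i,j). A $$ (i div dim_row B, j div dim_col B) * B $$ (i mod dim_row B, j mod dim_col B))"

(* (phi \<otimes> id_k)(X) for phi : L(C^dIn) -> L(C^dOut) and X an operator on C^dIn \<otimes> C^k *)
definition tensor_id :: "nat \<Rightarrow> nat \<Rightarrow> nat \<Rightarrow> (complex mat \<Rightarrow> complex mat) \<Rightarrow> complex mat \<Rightarrow> complex mat" where
  "tensor_id dIn dOut k \<phi> X = mat (dOut * k) (dOut * k) (\<lambda>(i,j).
      \<phi> (mat dIn dIn (\<lambda>(s,s'). X $$ (s * k + i mod k, s' * k + j mod k))) $$ (i div k, j div k))"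

(* quantum channel in C(In,Out): linear, completely positive, trace preserving *)
definition channel :: "nat \<Rightarrow> nat \<Rightarrow> (complex mat \<Rightarrow> complex mat) \<Rightarrow> bool" where
  "channel dIn dOut \<phi> \<longleftrightarrow>
     (\<forall>X \<in> carrier_mat dIn dIn. \<phi> X \<in> carrier_mat dOut dOut) \<and>
     (\<forall>X \<in> carrier_mat dIn dIn. \<forall>Y \<in> carrier_mat dIn dIn. \<phi> (X + Y) = \<phi> X + \<phi> Y) \<and>
     (\<forall>X \<in> carrier_mat dIn dIn. \<forall>c. \<phi> (c \<cdot>\<^sub>m X) = c \<cdot>\<^sub>m \<phi> X) \<and>
     (\<forall>k. \<forall>X. psd (dIn * k) X \<longrightarrow> psd (dOut * k) (tensor_id dIn dOut k \<phi> X)) \<and>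
     (\<forall>X \<in> carrier_mat dIn dIn. mtrace (\<phi> X) = mtrace X)"

(* Hilbert-Schmidt adjoint phi* : L(C^dOut) -> L(C^dIn) of phi : L(C^dIn) -> L(C^dOut),
   characterised by Tr[phi(X)^H Y] = Tr[X^H phi*(Y)]; entrywise
   phi*(Y)_{s,s'} = Tr[phi(|s><s'|)^H Y]. *)
definition hs_adjoint :: "nat \<Rightarrow> (complex mat \<Rightarrow> complex mat) \<Rightarrow> complex mat \<Rightarrow> complex mat" where
  "hs_adjoint dIn \<phi> Y = mat dIn dIn (\<lambda>(s,s'). mtrace (cadj (\<phi> (munit dIn s s')) * Y))"

(* Choi matrix C_psi = (psi \<otimes> id)(|I>><<I|) = sum_{i,i'} psi(|i><i'|) \<otimes> |i><i'|,
   for psi : L(C^dIn) -> L(C^dOut); an operator on C^dOut \<otimes> C^dIn *)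
definition choi :: "nat \<Rightarrow> nat \<Rightarrow> (complex mat \<Rightarrow> complex mat) \<Rightarrow> complex mat" where
  "choi dIn dOut \<psi> = tensor_id dIn dOut dIn \<psi>
      (mat (dIn * dIn) (dIn * dIn) (\<lambda>(a,b). if a mod (dIn + 1) = 0 \<and> b mod (dIn + 1) = 0 then 1 else 0))"

definition pairing :: "nat \<Rightarrow> nat \<Rightarrow> complex mat \<Rightarrow> (complex mat \<Rightarrow> complex mat) \<Rightarrow> complex" where
  "pairing dS dR X \<phi> = mtrace (X * choi dR dS (hs_adjoint dS \<phi>))"

definition dnorm_RS :: "nat \<Rightarrow> nat \<Rightarrow> complex mat \<Rightarrow> real" where
  "dnorm_RS dS dR X = Sup {Re (pairing dS dR X \<alpha>) | \<alpha>. channel dS dR \<alpha>}"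

definition qc_channel :: "nat \<Rightarrow> (nat \<Rightarrow> complex mat) \<Rightarrow> complex mat \<Rightarrow> complex mat" where
  "qc_channel dS M \<sigma> = mat dS dS (\<lambda>(i,j). if i = j then mtrace (\<sigma> * M i) else 0)"

definition cq_state :: "nat \<Rightarrow> nat \<Rightarrow> (nat \<Rightarrow> real) \<Rightarrow> (nat \<Rightarrow> complex mat) \<Rightarrow> complex mat" where
  "cq_state dA n lam \<rho> = msum (dA * n)
      (\<lambda>x. complex_of_real (lam x) \<cdot>\<^sub>m kron (\<rho> x) (munit n x x)) {..<n}"

definition ensemble :: "nat \<Rightarrow> nat \<Rightarrow> (nat \<Rightarrow> real) \<Rightarrow> (nat \<Rightarrow> complex mat) \<Rightarrow> bool" where
  "ensemble d n lam \<rho> \<longleftrightarrow> (\<forall>x<n. lam x \<ge> 0 \<and> state d (\<rho> x)) \<and> (\<Sum>x<n. lam x) = 1"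

definition Psucc_Q :: "nat \<Rightarrow> (nat \<Rightarrow> real) \<Rightarrow> (nat \<Rightarrow> complex mat) \<Rightarrow> nat \<Rightarrow> (nat \<Rightarrow> complex mat) \<Rightarrow> real" where
  "Psucc_Q n lam \<rho> m M = Sup {(\<Sum>x<n. \<Sum>j<m. lam x * p x j * Re (mtrace (\<rho> x * M j))) | p.
      (\<forall>x<n. \<forall>j<m. p x j \<ge> 0) \<and> (\<forall>j<m. (\<Sum>x<n. p x j) = 1)}"

definition Psucc :: "nat \<Rightarrow> nat \<Rightarrow> (nat \<Rightarrow> real) \<Rightarrow> (nat \<Rightarrow> complex mat) \<Rightarrow> real" where
  "Psucc d n lam \<rho> = Sup {(\<Sum>x<n. lam x * Re (mtrace (\<rho> x * N x))) | N. povm d n N}"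

end

theory Submission
  imports Defs
begin

lemma sum_split: "(\<Sum>i<m*k. (g::nat\<Rightarrow>'a::comm_monoid_add) i) = (\<Sum>p<m. \<Sum>c<k. g (p*k+c))"
proof (induction m)
  case 0 then show ?case by simp
next
  case (Suc m)
  have "{..<Suc m * k} = {..<m*k} \<union> {m*k..<m*k+k}" by auto
  then have "(\<Sum>i<Suc m*k. g i) = (\<Sum>i<m*k. g i) + (\<Sum>i\<in>{m*k..<m*k+k}. g i)"
    by (simp add: sum.union_disjoint ivl_disj_int)
  also have "(\<Sum>i\<in>{m*k..<m*k+k}. g i) = (\<Sum>c<k. g (m*k+c))"
    by (rule sum.reindex_bij_witness[of _ "\<lambda>c. m*k+c" "\<lambda>i. i - m*k"]) auto
  finally show ?case using Suc by simp
qed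


lemma argmax_ex: "(0::nat) < n \<Longrightarrow> \<exists>a<n. \<forall>b<n. (g::nat\<Rightarrow>real) b \<le> g a"
proof (induction n)
  case 0 then show ?case by simp
next
  case (Suc n)
  show ?case
  proof (cases "n = 0")
    case True then show ?thesis by auto
  next
    case False
    then obtain a where a: "a < n" "\<forall>b<n. g b \<le> g a" using Suc by auto
    show ?thesis
    proof (cases "g n \<le> g a")
      case True then show ?thesis using a by (metis less_Suc_eq)
    next
      case False then show ?thesis using a
        by (metis less_Suc_eq lessI linorder_le_cases order_trans)
    qed
  qed
qed

lemma weighted_le_max:
  fixes q r :: "nat \<Rightarrow> real"
  assumes "\<forall>a<n. r a \<ge> 0" "(\<Sum>a<n. r a) = 1" "\<forall>b<n. q b \<le> c"
  shows "(\<Sum>a<n. r a * q a) \<le> c"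
proof -
  have "(\<Sum>a<n. r a * q a) \<le> (\<Sum>a<n. r a * c)"
    by (rule sum_mono) (use assms in \<open>simp add: mult_left_mono\<close>)
  also have "\<dots> = c" using assms(2) by (simp add: sum_distrib_right[symmetric])
  finally show ?thesis .
qed

lemma sum_if_eq: "(b::nat) < n \<Longrightarrow> (\<Sum>a<n. if a = b then (h a :: 'a::comm_monoid_add) else 0) = h b"
  by (simp add: sum.delta')

lemma part1:
  fixes q :: "nat \<Rightarrow> nat \<Rightarrow> real"
  assumes hf: "\<forall>k<dS. f k < n \<and> (\<forall>b<n. q b k \<le> q (f k) k)"
    and hq: "\<And>a k. q a k = lam a * Re (mtrace (\<rho> a * M k))"
  shows "Psucc_Q n lam \<rho> dS M = (\<Sum>k<dS. q (f k) k)"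
  unfolding Psucc_Q_def
proof (rule cSup_eq_maximum)
  let ?p = "\<lambda>x j. if x = f j then 1 else (0::real)"
  have "(\<Sum>x<n. \<Sum>j<dS. lam x * ?p x j * Re (mtrace (\<rho> x * M j)))
      = (\<Sum>j<dS. \<Sum>x<n. if x = f j then q x j else 0)"
    by (subst sum.swap) (auto simp: hq intro!: sum.cong)
  also have "\<dots> = (\<Sum>k<dS. q (f k) k)"
    by (rule sum.cong) (use hf in \<open>auto simp: sum.delta'\<close>)
  finally have eq: "(\<Sum>x<n. \<Sum>j<dS. lam x * ?p x j * Re (mtrace (\<rho> x * M j))) = (\<Sum>k<dS. q (f k) k)" .
  have "(\<forall>x<n. \<forall>j<dS. ?p x j \<ge> 0) \<and> (\<forall>j<dS. (\<Sum>x<n. ?p x j) = 1)"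
    using hf by (auto simp: sum.delta')
  then show "(\<Sum>k<dS. q (f k) k) \<in> {(\<Sum>x<n. \<Sum>j<dS. lam x * p x j * Re (mtrace (\<rho> x * M j))) | p.
      (\<forall>x<n. \<forall>j<dS. p x j \<ge> 0) \<and> (\<forall>j<dS. (\<Sum>x<n. p x j) = 1)}"
    using eq by (intro CollectI exI[where x="?p"] conjI) simp_all
next
  fix y assume "y \<in> {(\<Sum>x<n. \<Sum>j<dS. lam x * p x j * Re (mtrace (\<rho> x * M j))) | p.
      (\<forall>x<n. \<forall>j<dS. p x j \<ge> 0) \<and> (\<forall>j<dS. (\<Sum>x<n. p x j) = 1)}"
  then obtain p where y: "y = (\<Sum>x<n. \<Sum>j<dS. lam x * p x j * Re (mtrace (\<rho> x * M j)))"
    and p: "\<forall>x<n. \<forall>j<dS. p x j \<ge> 0" "\<forall>j<dS. (\<Sum>x<n. p x j) = 1" by blast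
  have "y = (\<Sum>j<dS. \<Sum>x<n. p x j * q x j)"
    unfolding y by (subst sum.swap) (auto simp: hq intro!: sum.cong)
  also have "\<dots> \<le> (\<Sum>k<dS. q (f k) k)"
    by (rule sum_mono, rule weighted_le_max) (use p hf in auto)
  finally show "y \<le> (\<Sum>k<dS. q (f k) k)" .
qed



lemma sum_delta_mult1: "(\<Sum>j<(d::nat). (if i = j then a else 0) * (g j :: complex)) = (if i < d then a * g i else 0)"
  by (induct d) (auto simp: less_Suc_eq)

lemma sum_delta_mult2: "(\<Sum>j<(d::nat). (if j = i then a else 0) * (g j :: complex)) = (if i < d then a * g i else 0)"
  by (induct d) (auto simp: less_Suc_eq)

lemma of_real_if01: "complex_of_real (if P then 1 else 0) = (if P then 1 else 0)"
  by simp

lemma psd_carrier: "psd d A \<Longrightarrow> A \<in> carrier_mat d d"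
  by (simp add: psd_def)

lemma psd_diag:
  assumes "psd d A" "a < d"
  shows "Im (A $$ (a,a)) = 0 \<and> Re (A $$ (a,a)) \<ge> 0"
proof -
  have A: "A \<in> carrier_mat d d" using assms psd_carrier by auto
  have uv: "unit_vec d a \<in> carrier_vec d" by simp
  have "(\<Sum>i<d. cnj (vec_index (unit_vec d a) i) * vec_index (A *\<^sub>v unit_vec d a) i) = A $$ (a,a)"
  proof -
    have "(\<Sum>i<d. cnj (vec_index (unit_vec d a) i) * vec_index (A *\<^sub>v unit_vec d a) i)
        = (\<Sum>i<d. if i = a then vec_index (A *\<^sub>v unit_vec d a) a else 0)"
      by (rule sum.cong) (auto simp: unit_vec_def)
    also have "\<dots> = vec_index (A *\<^sub>v unit_vec d a) a" using assms(2) by (simp add: sum.delta')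
    also have "\<dots> = A $$ (a,a)" using A assms(2) by (simp add: row_def)
    finally show ?thesis .
  qed
  then show ?thesis using assms(1) uv unfolding psd_def Let_def by metis
qed

lemma psd_diagonal:
  assumes "\<forall>i<d. w i \<ge> 0"
  shows "psd d (mat d d (\<lambda>(i,j). if i = j then complex_of_real (w i) else 0))"
  unfolding psd_def Let_def
proof (intro conjI ballI)
  fix v :: "complex vec" assume v: "v \<in> carrier_vec d"
  let ?D = "mat d d (\<lambda>(i,j). if i = j then complex_of_real (w i) else 0)"
  have mv: "vec_index (?D *\<^sub>v v) i = complex_of_real (w i) * vec_index v i" if "i < d" for i
  proof -
    have "vec_index (?D *\<^sub>v v) i = (\<Sum>j<d. (if i = j then complex_of_real (w i) else 0) * vec_index v j)"
      using that v by (simp add: scalar_prod_def row_def lessThan_atLeast0)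
    also have "\<dots> = complex_of_real (w i) * vec_index v i" using that by (simp add: sum_delta_mult1)
    finally show ?thesis .
  qed
  have eq: "(\<Sum>i<d. cnj (vec_index v i) * vec_index (?D *\<^sub>v v) i) = (\<Sum>i<d. complex_of_real (w i * ((Re (vec_index v i))^2 + (Im (vec_index v i))^2)))"
  proof (rule sum.cong)
    fix i assume "i \<in> {..<d}"
    then show "cnj (vec_index v i) * vec_index (?D *\<^sub>v v) i = complex_of_real (w i * ((Re (vec_index v i))^2 + (Im (vec_index v i))^2))"
    proof -
      have "cnj (vec_index v i) * vec_index (?D *\<^sub>v v) i = complex_of_real (w i) * (vec_index v i * cnj (vec_index v i))"
        using mv[of i] \<open>i \<in> {..<d}\<close> by (simp add: ac_simps)
      then show ?thesis by (simp add: complex_mult_cnj)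
    qed
  qed simp
  show "Im (\<Sum>i<d. cnj (vec_index v i) * vec_index (?D *\<^sub>v v) i) = 0"
    unfolding eq by (simp add: Im_sum)
  show "0 \<le> Re (\<Sum>i<d. cnj (vec_index v i) * vec_index (?D *\<^sub>v v) i)"
    unfolding eq Re_sum using assms by (auto intro!: sum_nonneg)
qed simp

lemma mtrace_qc:
  assumes "N \<in> carrier_mat dS dS"
  shows "mtrace (qc_channel dS M \<sigma> * N) = (\<Sum>i<dS. mtrace (\<sigma> * M i) * N $$ (i,i))"
proof -
  have "(\<Sum>i<dim_row (qc_channel dS M \<sigma> * N). (qc_channel dS M \<sigma> * N) $$ (i, i))
     = (\<Sum>i<dS. \<Sum>l<dS. (if i = l then mtrace (\<sigma> * M i) else 0) * N $$ (l,i))"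
    using assms by (intro sum.cong) (auto simp: qc_channel_def scalar_prod_def row_def col_def lessThan_atLeast0)
  also have "\<dots> = (\<Sum>i<dS. mtrace (\<sigma> * M i) * N $$ (i,i))"
    by (simp add: sum_delta_mult1)
  finally show ?thesis by (simp add: mtrace_def)
qed

lemma part2:
  fixes q :: "nat \<Rightarrow> nat \<Rightarrow> real"
  assumes hf: "\<forall>k<dS. f k < n \<and> (\<forall>b<n. q b k \<le> q (f k) k)"
    and hq: "\<And>a k. q a k = lam a * Re (mtrace (\<rho> a * M k))"
  shows "Psucc dS n lam (\<lambda>x. qc_channel dS M (\<rho> x)) = (\<Sum>k<dS. q (f k) k)"
  unfolding Psucc_def
proof (rule cSup_eq_maximum)
  define N where "N x = mat dS dS (\<lambda>(i,j). if i = j then complex_of_real (if f i = x then 1 else 0) else 0)" for x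
  have psdN: "psd dS (N x)" for x unfolding N_def by (rule psd_diagonal) auto
  have "msum dS N {..<n} = 1\<^sub>m dS"
    by (rule eq_matI) (use hf in \<open>auto simp: msum_def N_def sum.delta' of_real_if01\<close>)
  then have povm: "povm dS n N" using psdN by (simp add: povm_def)
  have "(\<Sum>x<n. lam x * Re (mtrace (qc_channel dS M (\<rho> x) * N x)))
      = (\<Sum>x<n. \<Sum>i<dS. if x = f i then q x i else 0)"
    using psdN by (intro sum.cong) (auto simp: mtrace_qc psd_carrier N_def hq Re_sum sum_distrib_left intro!: sum.cong)
  also have "\<dots> = (\<Sum>k<dS. q (f k) k)"
    by (subst sum.swap, rule sum.cong) (use hf in \<open>auto simp: sum.delta'\<close>)
  finally have eq: "(\<Sum>x<n. lam x * Re (mtrace (qc_channel dS M (\<rho> x) * N x))) = (\<Sum>k<dS. q (f k) k)" .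
  show "(\<Sum>k<dS. q (f k) k) \<in> {(\<Sum>x<n. lam x * Re (mtrace (qc_channel dS M (\<rho> x) * N x))) | N. povm dS n N}"
    using eq povm by (intro CollectI exI[where x=N] conjI) simp_all
next
  fix y assume "y \<in> {(\<Sum>x<n. lam x * Re (mtrace (qc_channel dS M (\<rho> x) * N x))) | N. povm dS n N}"
  then obtain N where y: "y = (\<Sum>x<n. lam x * Re (mtrace (qc_channel dS M (\<rho> x) * N x)))"
    and N: "povm dS n N" by blast
  have psdN: "\<And>x. x < n \<Longrightarrow> psd dS (N x)" using N by (simp add: povm_def)
  have dg: "\<And>x i. x < n \<Longrightarrow> i < dS \<Longrightarrow> Im (N x $$ (i,i)) = 0 \<and> Re (N x $$ (i,i)) \<ge> 0"
    using psdN psd_diag by blast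
  have s1: "(\<Sum>x<n. Re (N x $$ (i,i))) = 1" if "i < dS" for i
  proof -
    have "msum dS N {..<n} $$ (i,i) = 1" using N that by (simp add: povm_def)
    then have "(\<Sum>x<n. N x $$ (i,i)) = 1" using that by (simp add: msum_def)
    then show ?thesis by (metis Re_sum one_complex.simps(1))
  qed
  have "y = (\<Sum>i<dS. \<Sum>x<n. Re (N x $$ (i,i)) * q x i)"
    unfolding y
    apply (subst sum.swap)
    apply (rule sum.cong, simp)
    using psdN dg by (auto simp: mtrace_qc psd_carrier hq Re_sum sum_distrib_left intro!: sum.cong)
  also have "\<dots> \<le> (\<Sum>k<dS. q (f k) k)"
    by (rule sum_mono, rule weighted_le_max) (use dg s1 hf in auto)
  finally show "y \<le> (\<Sum>k<dS. q (f k) k)" .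
qed



lemma dm: "(c::nat) < k \<Longrightarrow> (p*k+c) div k = p \<and> (p*k+c) mod k = c"
  by simp

lemma idx_lt: "(p::nat) < n \<Longrightarrow> c < k \<Longrightarrow> p*k+c < n*k"
  using mult_le_mono1[of "Suc p" n k] by simp

definition qf2 :: "nat \<Rightarrow> complex mat \<Rightarrow> complex vec \<Rightarrow> complex" where
  "qf2 d A v = (\<Sum>i<d. \<Sum>j<d. cnj (v$i) * A$$(i,j) * v$j)"

lemma mult_vec_idx: "A \<in> carrier_mat d d \<Longrightarrow> v \<in> carrier_vec d \<Longrightarrow> u < d \<Longrightarrow>
   (A *\<^sub>v v) $ u = (\<Sum>j<d. A $$ (u,j) * v $ j)"
  by (simp add: scalar_prod_def row_def lessThan_atLeast0 mult.commute)

lemma psd_qf2: "psd d A \<longleftrightarrow> A \<in> carrier_mat d d \<and> (\<forall>v\<in>carrier_vec d. Im (qf2 d A v) = 0 \<and> Re (qf2 d A v) \<ge> 0)"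
proof -
  have key: "A \<in> carrier_mat d d \<Longrightarrow> v \<in> carrier_vec d \<Longrightarrow>
     (\<Sum>i<d. cnj (v$i) * (A *\<^sub>v v) $ i) = qf2 d A v" for v
    unfolding qf2_def using mult_vec_idx[of A d v]
    by (auto simp del: index_mult_mat_vec simp: sum_distrib_left mult.assoc intro!: sum.cong)
  show ?thesis
  proof (cases "A \<in> carrier_mat d d")
    case True then show ?thesis using key[OF True] by (simp add: psd_def Let_def)
  next
    case False then show ?thesis by (simp add: psd_def Let_def)
  qed
qed

lemma swap3: "(\<Sum>c\<in>C. \<Sum>c'\<in>D. \<Sum>s\<in>S. (h c c' s :: 'a::comm_monoid_add)) = (\<Sum>s\<in>S. \<Sum>c\<in>C. \<Sum>c'\<in>D. h c c' s)"
proof -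
  have "(\<Sum>c\<in>C. \<Sum>c'\<in>D. \<Sum>s\<in>S. h c c' s) = (\<Sum>c\<in>C. \<Sum>s\<in>S. \<Sum>c'\<in>D. h c c' s)"
    by (intro sum.cong refl) (rule sum.swap)
  also have "\<dots> = (\<Sum>s\<in>S. \<Sum>c\<in>C. \<Sum>c'\<in>D. h c c' s)" by (rule sum.swap)
  finally show ?thesis .
qed
lemma swap4: "(\<Sum>p\<in>P. \<Sum>c\<in>C. \<Sum>c'\<in>D. \<Sum>s\<in>S. (h p c c' s :: 'a::comm_monoid_add)) = (\<Sum>s\<in>S. \<Sum>c\<in>C. \<Sum>c'\<in>D. \<Sum>p\<in>P. h p c c' s)"
proof -
  have "(\<Sum>p\<in>P. \<Sum>c\<in>C. \<Sum>c'\<in>D. \<Sum>s\<in>S. h p c c' s) = (\<Sum>p\<in>P. \<Sum>s\<in>S. \<Sum>c\<in>C. \<Sum>c'\<in>D. h p c c' s)"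
    by (intro sum.cong refl) (rule swap3)
  also have "\<dots> = (\<Sum>s\<in>S. \<Sum>p\<in>P. \<Sum>c\<in>C. \<Sum>c'\<in>D. h p c c' s)" by (rule sum.swap)
  also have "\<dots> = (\<Sum>s\<in>S. \<Sum>c\<in>C. \<Sum>c'\<in>D. \<Sum>p\<in>P. h p c c' s)"
    by (intro sum.cong refl) (rule swap3[symmetric])
  finally show ?thesis .
qed

definition alpha0 :: "nat \<Rightarrow> nat \<Rightarrow> (nat \<Rightarrow> nat) \<Rightarrow> complex mat \<Rightarrow> complex mat" where
  "alpha0 dS n f Y = mat n n (\<lambda>(p,p'). if p = p' then (\<Sum>s<dS. if f s = p then Y $$ (s,s) else 0) else 0)"

lemma sum_single: "finite A \<Longrightarrow> a \<in> A \<Longrightarrow> (\<And>x. x \<in> A \<Longrightarrow> x \<noteq> a \<Longrightarrow> F x = 0) \<Longrightarrow> sum F A = F a"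
  using sum.mono_neutral_right[of A "{a}" F] by auto

lemma alpha0_CP:
  assumes hf: "\<forall>s<dS. f s < n" and X: "psd (dS*k) X"
  shows "psd (n*k) (tensor_id dS n k (alpha0 dS n f) X)"
proof -
  let ?Y = "tensor_id dS n k (alpha0 dS n f) X"
  define e where "e s p = (if f s = p then 1 else (0::complex))" for s p
  have Xc: "X \<in> carrier_mat (dS*k) (dS*k)" using X psd_carrier by auto
  have Yc: "?Y \<in> carrier_mat (n*k) (n*k)" by (simp add: tensor_id_def)
  have Yent: "?Y $$ (p*k+c, p'*k+c') = (if p = p' then (\<Sum>s<dS. e s p * X $$ (s*k+c, s*k+c')) else 0)"
    if "p < n" "c < k" "p' < n" "c' < k" for p c p' c'
  proof -
    have "?Y $$ (p*k+c, p'*k+c') = alpha0 dS n f (mat dS dS (\<lambda>(s,s'). X $$ (s*k + c, s'*k + c'))) $$ (p, p')"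
      using that idx_lt[OF that(1,2)] idx_lt[OF that(3,4)]
      by (simp add: tensor_id_def dm[OF that(2)] dm[OF that(4)])
    also have "\<dots> = (if p = p' then (\<Sum>s<dS. e s p * X $$ (s*k+c, s*k+c')) else 0)"
      using that by (auto simp: alpha0_def e_def intro!: sum.cong)
    finally show ?thesis .
  qed
  show ?thesis unfolding psd_qf2
  proof (intro conjI ballI Yc)
    fix v :: "complex vec" assume v: "v \<in> carrier_vec (n*k)"
    define g where "g s c c' = cnj (v$(f s*k+c)) * X$$(s*k+c, s*k+c') * v$(f s*k+c')" for s c c'
    define w where "w s = vec (dS*k) (\<lambda>u. if u div k = s then v$(f s*k + u mod k) else 0)" for s
    have "qf2 (n*k) ?Y v = (\<Sum>p<n. \<Sum>c<k. \<Sum>p'<n. \<Sum>c'<k. cnj (v$(p*k+c)) * ?Y$$(p*k+c, p'*k+c') * v$(p'*k+c'))"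
      unfolding qf2_def sum_split ..
    also have "\<dots> = (\<Sum>p<n. \<Sum>c<k. \<Sum>c'<k. \<Sum>s<dS. e s p * g s c c')"
    proof (rule sum.cong[OF refl], rule sum.cong[OF refl])
      fix p c assume pc: "p \<in> {..<n}" "c \<in> {..<k}"
      have "(\<Sum>p'<n. \<Sum>c'<k. cnj (v$(p*k+c)) * ?Y$$(p*k+c, p'*k+c') * v$(p'*k+c'))
          = (\<Sum>p'<n. if p' = p then (\<Sum>c'<k. cnj (v$(p*k+c)) * (\<Sum>s<dS. e s p * X $$ (s*k+c, s*k+c')) * v$(p*k+c')) else 0)"
        using pc by (intro sum.cong refl) (auto simp: Yent)
      also have "\<dots> = (\<Sum>c'<k. cnj (v$(p*k+c)) * (\<Sum>s<dS. e s p * X $$ (s*k+c, s*k+c')) * v$(p*k+c'))"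
        using pc by (simp add: sum.delta')
      also have "\<dots> = (\<Sum>c'<k. \<Sum>s<dS. e s p * g s c c')"
        by (intro sum.cong refl) (auto simp: sum_distrib_left sum_distrib_right g_def e_def intro!: sum.cong)
      finally show "(\<Sum>p'<n. \<Sum>c'<k. cnj (v$(p*k+c)) * ?Y$$(p*k+c, p'*k+c') * v$(p'*k+c'))
          = (\<Sum>c'<k. \<Sum>s<dS. e s p * g s c c')" .
    qed
    also have "\<dots> = (\<Sum>s<dS. \<Sum>c<k. \<Sum>c'<k. \<Sum>p<n. e s p * g s c c')"
      by (rule swap4)
    also have "\<dots> = (\<Sum>s<dS. \<Sum>c<k. \<Sum>c'<k. g s c c')"
      using hf by (intro sum.cong refl) (auto simp: e_def sum_distrib_right[symmetric])
    finally have e1: "qf2 (n*k) ?Y v = (\<Sum>s<dS. \<Sum>c<k. \<Sum>c'<k. g s c c')" .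
    have wv: "(w s)$(s1*k+c) = (if s1 = s then v$(f s*k+c) else 0)" if "s1 < dS" "c < k" for s s1 c
      using that by (simp add: w_def idx_lt dm)
    have e2: "qf2 (dS*k) X (w s) = (\<Sum>c<k. \<Sum>c'<k. g s c c')" if "s < dS" for s
    proof -
      have "qf2 (dS*k) X (w s) = (\<Sum>s1<dS. \<Sum>c<k. \<Sum>s2<dS. \<Sum>c'<k. cnj ((w s)$(s1*k+c)) * X$$(s1*k+c, s2*k+c') * (w s)$(s2*k+c'))"
        unfolding qf2_def sum_split ..
      also have "\<dots> = (\<Sum>c<k. \<Sum>s2<dS. \<Sum>c'<k. cnj ((w s)$(s*k+c)) * X$$(s*k+c, s2*k+c') * (w s)$(s2*k+c'))"
        by (rule sum_single) (use that in \<open>auto simp: wv\<close>)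
      also have "\<dots> = (\<Sum>c<k. \<Sum>c'<k. cnj ((w s)$(s*k+c)) * X$$(s*k+c, s*k+c') * (w s)$(s*k+c'))"
        by (rule sum.cong[OF refl], rule sum_single) (use that in \<open>auto simp: wv\<close>)
      also have "\<dots> = (\<Sum>c<k. \<Sum>c'<k. g s c c')"
        by (rule sum.cong[OF refl], rule sum.cong[OF refl]) (use that in \<open>auto simp: wv g_def\<close>)
      finally show ?thesis .
    qed
    have wc: "w s \<in> carrier_vec (dS*k)" for s by (simp add: w_def)
    have "qf2 (n*k) ?Y v = (\<Sum>s<dS. qf2 (dS*k) X (w s))" using e1 e2 by simp
    moreover have "Im (qf2 (dS*k) X (w s)) = 0 \<and> Re (qf2 (dS*k) X (w s)) \<ge> 0" for s
      using X wc unfolding psd_qf2 by blast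
    ultimately show "Im (qf2 (n*k) ?Y v) = 0" "Re (qf2 (n*k) ?Y v) \<ge> 0"
      by (simp_all add: Im_sum Re_sum sum_nonneg)
  qed
qed



lemma alpha0_channel:
  assumes hf: "\<forall>s<dS. f s < n"
  shows "channel dS n (alpha0 dS n f)"
  unfolding channel_def
proof (intro conjI ballI allI impI)
  fix X :: "complex mat" assume "X \<in> carrier_mat dS dS"
  then show "alpha0 dS n f X \<in> carrier_mat n n" by (simp add: alpha0_def)
next
  fix X Y :: "complex mat" assume X: "X \<in> carrier_mat dS dS" and Y: "Y \<in> carrier_mat dS dS"
  show "alpha0 dS n f (X + Y) = alpha0 dS n f X + alpha0 dS n f Y"
    by (rule eq_matI) (use X Y in \<open>auto simp: alpha0_def sum.distrib[symmetric] intro!: sum.cong\<close>)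
next
  fix X :: "complex mat" and c :: complex assume X: "X \<in> carrier_mat dS dS"
  show "alpha0 dS n f (c \<cdot>\<^sub>m X) = c \<cdot>\<^sub>m alpha0 dS n f X"
    by (rule eq_matI) (use X in \<open>auto simp: alpha0_def sum_distrib_left intro!: sum.cong\<close>)
next
  fix k and X :: "complex mat" assume "psd (dS * k) X"
  then show "psd (n * k) (tensor_id dS n k (alpha0 dS n f) X)" using alpha0_CP hf by blast
next
  fix X :: "complex mat" assume X: "X \<in> carrier_mat dS dS"
  have "mtrace (alpha0 dS n f X) = (\<Sum>p<n. \<Sum>s<dS. if f s = p then X $$ (s,s) else 0)"
    by (simp add: mtrace_def alpha0_def)
  also have "\<dots> = (\<Sum>s<dS. \<Sum>p<n. if f s = p then X $$ (s,s) else 0)" by (rule sum.swap)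
  also have "\<dots> = (\<Sum>s<dS. X $$ (s,s))" using hf by (intro sum.cong refl) simp
  also have "\<dots> = mtrace X" using X by (simp add: mtrace_def)
  finally show "mtrace (alpha0 dS n f X) = mtrace X" .
qed

lemma mod_np1: "(s::nat) < n \<Longrightarrow> a < n \<Longrightarrow> ((s*n+a) mod (n+1) = 0) = (s = a)"
proof -
  assume sa: "s < n" "a < n"
  have "((s*n+a) mod (n+1) = 0) = (int (n+1) dvd int (s*n+a))"
    by (simp only: mod_eq_0_iff_dvd int_dvd_int_iff)
  also have "int (s*n+a) = (int a - int s) + int s * int (n+1)" by (simp add: algebra_simps)
  also have "(int (n+1) dvd (int a - int s) + int s * int (n+1)) = (int (n+1) dvd (int a - int s))"
    by (metis dvd_add_left_iff dvd_triv_right)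
  also have "\<dots> = (s = a)"
  proof
    assume d: "int (n+1) dvd (int a - int s)"
    show "s = a"
    proof (rule ccontr)
      assume "s \<noteq> a"
      then have "int a - int s \<noteq> 0" by simp
      from dvd_imp_le_int[OF this d] sa show False by simp
    qed
  qed simp
  finally show ?thesis .
qed



lemma mtrace_smult: "A \<in> carrier_mat d d \<Longrightarrow> mtrace (c \<cdot>\<^sub>m A) = c * mtrace A"
  unfolding mtrace_def by (auto simp: sum_distrib_left intro!: sum.cong)

lemma sum_delta_mult3: "(\<Sum>j<(d::nat). (g j :: complex) * (if j = i then 1 else 0)) = (if i < d then g i else 0)"
  by (induct d) (auto simp: less_Suc_eq)

lemma mod_np1': "(s::nat) < n \<Longrightarrow> a < n \<Longrightarrow> (Suc n dvd s*n+a) = (s = a)"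
  using mod_np1[of s n a] by (simp add: mod_eq_0_iff_dvd)

lemma idx_dm: "i < m * (n::nat) \<Longrightarrow> i div n < m \<and> i mod n < n"
  by (metis less_mult_imp_div_less mod_less_divisor mult_eq_0_iff not_gr_zero not_less0)

lemma eq_by_dm: "(i::nat) = j \<longleftrightarrow> i div n = j div n \<and> i mod n = j mod n"
  by (metis div_mult_mod_eq)

lemma X_diag:
  assumes rho: "\<forall>x<n. \<rho> x \<in> carrier_mat dA dA" and Mc: "\<forall>j<dS. M j \<in> carrier_mat dA dA"
  shows "tensor_id dA dS n (qc_channel dS M) (cq_state dA n lam \<rho>)
    = mat (dS*n) (dS*n) (\<lambda>(i,j). if i = j then complex_of_real (lam (i mod n)) * mtrace (\<rho> (i mod n) * M (i div n)) else 0)"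
proof (rule eq_matI)
  fix i j assume ij: "i < dim_row (mat (dS*n) (dS*n) (\<lambda>(i,j). if i = j then complex_of_real (lam (i mod n)) * mtrace (\<rho> (i mod n) * M (i div n)) else 0))"
    "j < dim_col (mat (dS*n) (dS*n) (\<lambda>(i,j). if i = j then complex_of_real (lam (i mod n)) * mtrace (\<rho> (i mod n) * M (i div n)) else 0))"
  then have i: "i < dS*n" and j: "j < dS*n" by auto
  define k a l b where "k = i div n" "a = i mod n" "l = j div n" "b = j mod n"
  have ka: "k < dS" "a < n" "l < dS" "b < n" using idx_dm[OF i] idx_dm[OF j] k_a_l_b_def by auto
  define B where "B = mat dA dA (\<lambda>(s,s'). cq_state dA n lam \<rho> $$ (s * n + a, s' * n + b))"
  have B: "B = (if a = b then complex_of_real (lam a) \<cdot>\<^sub>m \<rho> a else 0\<^sub>m dA dA)"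
  proof (rule eq_matI)
    fix s s' assume "s < dim_row (if a = b then complex_of_real (lam a) \<cdot>\<^sub>m \<rho> a else 0\<^sub>m dA dA)"
      "s' < dim_col (if a = b then complex_of_real (lam a) \<cdot>\<^sub>m \<rho> a else 0\<^sub>m dA dA)"
    then have ss: "s < dA" "s' < dA" using rho ka by (auto split: if_splits)
    have "B $$ (s,s') = (\<Sum>x<n. complex_of_real (lam x) * (\<rho> x $$ (s, s') * (if a = x \<and> b = x then 1 else 0)))"
      unfolding B_def cq_state_def msum_def using ss ka idx_lt[OF ss(1) ka(2)] idx_lt[OF ss(2) ka(4)] rho
      by (auto simp: kron_def munit_def dm intro!: sum.cong)
    also have "\<dots> = (if a = b then complex_of_real (lam a) \<cdot>\<^sub>m \<rho> a else 0\<^sub>m dA dA) $$ (s,s')"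
    proof (cases "a = b")
      case True
      then show ?thesis using ss ka rho by (subst sum_single[where a=a]) auto
    next
      case False
      then show ?thesis using ss ka rho by (auto intro: sum.neutral)
    qed
    finally show "B $$ (s,s') = (if a = b then complex_of_real (lam a) \<cdot>\<^sub>m \<rho> a else 0\<^sub>m dA dA) $$ (s,s')" .
  qed (use rho ka in \<open>auto simp: B_def\<close>)
  have "tensor_id dA dS n (qc_channel dS M) (cq_state dA n lam \<rho>) $$ (i,j) = qc_channel dS M B $$ (k, l)"
    using i j unfolding tensor_id_def B_def k_a_l_b_def by simp
  also have "\<dots> = (if k = l then mtrace (B * M k) else 0)"
    using ka by (simp add: qc_channel_def)
  also have "\<dots> = (if i = j then complex_of_real (lam a) * mtrace (\<rho> a * M k) else 0)"
  proof -
    have "mtrace ((complex_of_real (lam a) \<cdot>\<^sub>m \<rho> a) * M k) = complex_of_real (lam a) * mtrace (\<rho> a * M k)"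
    proof -
      have r: "\<rho> a \<in> carrier_mat dA dA" and m: "M k \<in> carrier_mat dA dA" using rho Mc ka by auto
      then show ?thesis by (simp add: mult_smult_assoc_mat[OF r m] mtrace_smult[of _ dA])
    qed
    moreover have "mtrace (0\<^sub>m dA dA * M k) = 0"
    proof -
      have "0\<^sub>m dA dA * M k = 0\<^sub>m dA dA" using Mc ka by (simp add: left_mult_zero_mat)
      then show ?thesis by (simp add: mtrace_def)
    qed
    ultimately show ?thesis unfolding B using eq_by_dm[of i j n] k_a_l_b_def by auto
  qed
  finally show "tensor_id dA dS n (qc_channel dS M) (cq_state dA n lam \<rho>) $$ (i,j) =
     mat (dS*n) (dS*n) (\<lambda>(i,j). if i = j then complex_of_real (lam (i mod n)) * mtrace (\<rho> (i mod n) * M (i div n)) else 0) $$ (i,j)"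
    using i j k_a_l_b_def by simp
qed (simp_all add: tensor_id_def)

lemma choi_diag:
  assumes i: "i < dS * n"
  shows "choi n dS \<psi> $$ (i,i) = \<psi> (munit n (i mod n) (i mod n)) $$ (i div n, i div n)"
proof -
  have a: "i mod n < n" using idx_dm[OF i] by auto
  have "mat n n (\<lambda>(s,s'). mat (n * n) (n * n) (\<lambda>(a,b). if a mod (n + 1) = 0 \<and> b mod (n + 1) = 0 then 1 else 0) $$ (s * n + i mod n, s' * n + i mod n))
       = munit n (i mod n) (i mod n)"
    by (rule eq_matI) (use a in \<open>auto simp: munit_def idx_lt mod_np1 mod_np1'\<close>)
  then show ?thesis using i unfolding choi_def tensor_id_def by simp
qed

lemma hs_adj_entry:
  assumes A: "\<alpha> (munit dS k k) \<in> carrier_mat n n" and k: "k < dS" and a: "a < n"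
  shows "hs_adjoint dS \<alpha> (munit n a a) $$ (k,k) = cnj (\<alpha> (munit dS k k) $$ (a,a))"
proof -
  let ?A = "\<alpha> (munit dS k k)"
  have "mtrace (cadj ?A * munit n a a) = (\<Sum>u<n. if u = a then cnj (?A $$ (a,a)) else 0)"
    unfolding mtrace_def using A
    by (intro sum.cong) (auto simp: cadj_def munit_def scalar_prod_def row_def col_def sum_delta_mult3 lessThan_atLeast0[symmetric])
  also have "\<dots> = cnj (?A $$ (a,a))" using a by simp
  finally show ?thesis using k by (simp add: hs_adjoint_def)
qed



lemma pairing_formula:
  assumes rho: "\<forall>x<n. \<rho> x \<in> carrier_mat dA dA" and Mc: "\<forall>j<dS. M j \<in> carrier_mat dA dA"
    and Ac: "\<forall>k<dS. \<alpha> (munit dS k k) \<in> carrier_mat n n"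
  shows "pairing dS n (tensor_id dA dS n (qc_channel dS M) (cq_state dA n lam \<rho>)) \<alpha>
    = (\<Sum>k<dS. \<Sum>a<n. complex_of_real (lam a) * mtrace (\<rho> a * M k) * cnj (\<alpha> (munit dS k k) $$ (a,a)))"
proof -
  define d where "d i = complex_of_real (lam (i mod n)) * mtrace (\<rho> (i mod n) * M (i div n))" for i
  let ?D = "mat (dS*n) (dS*n) (\<lambda>(i,j). if i = j then d i else 0)"
  let ?C = "choi n dS (hs_adjoint dS \<alpha>)"
  have Cc: "?C \<in> carrier_mat (dS*n) (dS*n)" by (simp add: choi_def tensor_id_def)
  have XD: "tensor_id dA dS n (qc_channel dS M) (cq_state dA n lam \<rho>) = ?D"
    unfolding d_def by (rule X_diag[OF rho Mc])
  have "mtrace (?D * ?C) = (\<Sum>i<dS*n. \<Sum>l<dS*n. (if i = l then d i else 0) * ?C $$ (l,i))"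
    unfolding mtrace_def using Cc
    by (intro sum.cong) (auto simp: scalar_prod_def row_def col_def lessThan_atLeast0)
  also have "\<dots> = (\<Sum>i<dS*n. d i * ?C $$ (i,i))"
    by (intro sum.cong refl) (simp add: sum_delta_mult1)
  also have "\<dots> = (\<Sum>i<dS*n. d i * cnj (\<alpha> (munit dS (i div n) (i div n)) $$ (i mod n, i mod n)))"
  proof (intro sum.cong refl)
    fix i assume "i \<in> {..<dS*n}"
    then have i: "i < dS*n" by simp
    from idx_dm[OF i] have "i div n < dS" "i mod n < n" by auto
    then show "d i * ?C $$ (i,i) = d i * cnj (\<alpha> (munit dS (i div n) (i div n)) $$ (i mod n, i mod n))"
      using choi_diag[OF i] hs_adj_entry Ac by simp
  qed
  also have "\<dots> = (\<Sum>k<dS. \<Sum>a<n. complex_of_real (lam a) * mtrace (\<rho> a * M k) * cnj (\<alpha> (munit dS k k) $$ (a,a)))"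
    unfolding sum_split by (intro sum.cong refl) (simp add: d_def dm)
  finally show ?thesis unfolding pairing_def XD .
qed

lemma munit_diag: "munit d k k = mat d d (\<lambda>(i,j). if i = j then complex_of_real (if i = k then 1 else 0) else 0)"
  by (rule eq_matI) (auto simp: munit_def)

lemma channel_diag:
  assumes ch: "channel dS n \<alpha>" and k: "k < dS"
  shows "\<alpha> (munit dS k k) \<in> carrier_mat n n"
    and "\<forall>a<n. Im (\<alpha> (munit dS k k) $$ (a,a)) = 0 \<and> Re (\<alpha> (munit dS k k) $$ (a,a)) \<ge> 0"
    and "(\<Sum>a<n. Re (\<alpha> (munit dS k k) $$ (a,a))) = 1"
proof -
  let ?A = "\<alpha> (munit dS k k)"
  have mc: "munit dS k k \<in> carrier_mat dS dS" by (simp add: munit_def)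
  show Ac: "?A \<in> carrier_mat n n" using ch mc by (simp add: channel_def)
  have "psd dS (munit dS k k)" unfolding munit_diag by (rule psd_diagonal) auto
  moreover have "\<forall>k X. psd (dS*k) X \<longrightarrow> psd (n*k) (tensor_id dS n k \<alpha> X)" using ch unfolding channel_def by blast
  ultimately have "psd (n*1) (tensor_id dS n 1 \<alpha> (munit dS k k))" by (metis mult_1_right)
  moreover have "tensor_id dS n 1 \<alpha> (munit dS k k) = ?A"
  proof -
    have "mat dS dS (\<lambda>(s,s'). munit dS k k $$ (s * 1 + i mod 1, s' * 1 + j mod 1)) = munit dS k k" for i j
      by (rule eq_matI) (auto simp: munit_def)
    then show ?thesis using Ac by (intro eq_matI) (auto simp: tensor_id_def)
  qed
  ultimately have psdA: "psd n ?A" by simp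
  show "\<forall>a<n. Im (?A $$ (a,a)) = 0 \<and> Re (?A $$ (a,a)) \<ge> 0" using psd_diag[OF psdA] by blast
  have "mtrace ?A = mtrace (munit dS k k)" using ch mc by (simp add: channel_def)
  also have "\<dots> = 1" using k by (simp add: mtrace_def munit_def sum.delta)
  finally have "mtrace ?A = 1" .
  then have "(\<Sum>a<n. ?A $$ (a,a)) = 1" using Ac by (simp add: mtrace_def)
  then show "(\<Sum>a<n. Re (?A $$ (a,a))) = 1" by (metis Re_sum one_complex.simps(1))
qed

lemma part3:
  fixes q :: "nat \<Rightarrow> nat \<Rightarrow> real"
  assumes hf: "\<forall>k<dS. f k < n \<and> (\<forall>b<n. q b k \<le> q (f k) k)"
    and hq: "\<And>a k. q a k = lam a * Re (mtrace (\<rho> a * M k))"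
    and rho: "\<forall>x<n. \<rho> x \<in> carrier_mat dA dA" and Mc: "\<forall>j<dS. M j \<in> carrier_mat dA dA"
  shows "dnorm_RS dS n (tensor_id dA dS n (qc_channel dS M) (cq_state dA n lam \<rho>)) = (\<Sum>k<dS. q (f k) k)"
  unfolding dnorm_RS_def
proof (rule cSup_eq_maximum)
  let ?X = "tensor_id dA dS n (qc_channel dS M) (cq_state dA n lam \<rho>)"
  let ?a0 = "alpha0 dS n f"
  have ch: "channel dS n ?a0" by (rule alpha0_channel) (use hf in auto)
  have Ac: "\<forall>k<dS. ?a0 (munit dS k k) \<in> carrier_mat n n" by (simp add: alpha0_def)
  have ent: "?a0 (munit dS k k) $$ (a,a) = (if f k = a then 1 else 0)" if "k < dS" "a < n" for k a
  proof -
    have "(\<Sum>s<dS. if f s = a then munit dS k k $$ (s,s) else 0) = (if f k = a then 1 else 0)"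
      using that by (subst sum_single[where a=k]) (auto simp: munit_def)
    then show ?thesis using that by (simp add: alpha0_def)
  qed
  have "Re (pairing dS n ?X ?a0) = (\<Sum>k<dS. \<Sum>a<n. if f k = a then q a k else 0)"
    unfolding pairing_formula[OF rho Mc Ac] Re_sum
    by (intro sum.cong refl) (auto simp: ent hq)
  also have "\<dots> = (\<Sum>k<dS. q (f k) k)"
    using hf by (intro sum.cong refl) (simp add: sum.delta)
  finally have eq: "Re (pairing dS n ?X ?a0) = (\<Sum>k<dS. q (f k) k)" .
  show "(\<Sum>k<dS. q (f k) k) \<in> {Re (pairing dS n ?X \<alpha>) | \<alpha>. channel dS n \<alpha>}"
    using eq ch by (intro CollectI exI[where x="?a0"] conjI) simp_all
next
  let ?X = "tensor_id dA dS n (qc_channel dS M) (cq_state dA n lam \<rho>)"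
  fix y assume "y \<in> {Re (pairing dS n ?X \<alpha>) | \<alpha>. channel dS n \<alpha>}"
  then obtain \<alpha> where y: "y = Re (pairing dS n ?X \<alpha>)" and ch: "channel dS n \<alpha>" by blast
  have Ac: "\<forall>k<dS. \<alpha> (munit dS k k) \<in> carrier_mat n n" using channel_diag(1)[OF ch] by blast
  have dg: "\<And>k a. k < dS \<Longrightarrow> a < n \<Longrightarrow> Im (\<alpha> (munit dS k k) $$ (a,a)) = 0 \<and> Re (\<alpha> (munit dS k k) $$ (a,a)) \<ge> 0"
    using channel_diag(2)[OF ch] by blast
  have y2: "y = (\<Sum>k<dS. \<Sum>a<n. Re (\<alpha> (munit dS k k) $$ (a,a)) * q a k)"
    unfolding y pairing_formula[OF rho Mc Ac] Re_sum
    by (intro sum.cong refl) (use dg in \<open>auto simp: hq\<close>)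
  also have "\<dots> \<le> (\<Sum>k<dS. q (f k) k)"
    by (rule sum_mono, rule weighted_le_max) (use dg channel_diag(3)[OF ch] hf in auto)
  finally show "y \<le> (\<Sum>k<dS. q (f k) k)" .
qed


theorem lemma4:
  fixes dA dS n :: nat and lam :: "nat \<Rightarrow> real" and \<rho> M :: "nat \<Rightarrow> complex mat"
  assumes "ensemble dA n lam \<rho>"
    and "povm dA dS M"
  shows "Psucc_Q n lam \<rho> dS M
           = dnorm_RS dS n (tensor_id dA dS n (qc_channel dS M) (cq_state dA n lam \<rho>))
       \<and> dnorm_RS dS n (tensor_id dA dS n (qc_channel dS M) (cq_state dA n lam \<rho>))
           = Psucc dS n lam (\<lambda>x. qc_channel dS M (\<rho> x))"
proof -
  have n: "0 < n"
  proof (rule ccontr)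
    assume "\<not> 0 < n"
    then have "n = 0" by simp
    then show False using assms(1) by (simp add: ensemble_def)
  qed
  have rho: "\<forall>x<n. \<rho> x \<in> carrier_mat dA dA"
    using assms(1) psd_carrier unfolding ensemble_def state_def by blast
  have Mc: "\<forall>j<dS. M j \<in> carrier_mat dA dA"
    using assms(2) psd_carrier unfolding povm_def by blast
  define q where "q a k = lam a * Re (mtrace (\<rho> a * M k))" for a k
  define f where "f k = (SOME a. a < n \<and> (\<forall>b<n. q b k \<le> q a k))" for k
  have hq: "\<And>a k. q a k = lam a * Re (mtrace (\<rho> a * M k))" by (simp add: q_def)
  have hf: "\<forall>k<dS. f k < n \<and> (\<forall>b<n. q b k \<le> q (f k) k)"
  proof (intro allI impI)
    fix k
    have "\<exists>a<n. \<forall>b<n. q b k \<le> q a k" using argmax_ex[OF n, of "\<lambda>a. q a k"] by simp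
    then have "\<exists>a. a < n \<and> (\<forall>b<n. q b k \<le> q a k)" by simp
    from someI_ex[OF this] show "f k < n \<and> (\<forall>b<n. q b k \<le> q (f k) k)" unfolding f_def .
  qed
  have e1: "Psucc_Q n lam \<rho> dS M = (\<Sum>k<dS. q (f k) k)" by (rule part1[OF hf hq])
  have e2: "Psucc dS n lam (\<lambda>x. qc_channel dS M (\<rho> x)) = (\<Sum>k<dS. q (f k) k)" by (rule part2[OF hf hq])
  have e3: "dnorm_RS dS n (tensor_id dA dS n (qc_channel dS M) (cq_state dA n lam \<rho>)) = (\<Sum>k<dS. q (f k) k)"
    by (rule part3[OF hf hq rho Mc])
  show ?thesis unfolding e1 e2 e3 by simp
qed

end
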